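(* Let $\mathscr{A}=\{A_1,\ldots,A_r\}$ be an irreducible set of real $d\times d$ matrices, let $\|\cdot\|$ be any norm on $\mathbb{R}^d$, and let $\chi_p(\mathscr{A})$ denote the $p$-measure of irreducibility with respect to this norm. Then for every integer $n\ge 1$ and every integer $p\ge d-1$, \[ \rho(\mathscr{A})\le \|\mathscr{A}^n\|^{1/n}\le \big(\eta_p(\mathscr{A})\big)^{1/n}\rho(\mathscr{A}),\qquad\text{where }\ \eta_p(\mathscr{A})=\frac{\max\{1,\rho(\mathscr{A})^p\}}{\chi_p(\mathscr{A})}, \] and consequently \[ \big(\nu_p(\mathscr{A})\big)^{-1/n}\|\mathscr{A}^n\|^{1/n}\le \rho(\mathscr{A})\le \|\mathscr{A}^n\|^{1/n},\qquad\text{where }\ \nu_p(\mathscr{A})=\frac{\max\{1,\|\mathscr{A}\|^p\}}{\chi_p(\mathscr{A})}. \]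
   Context: A finite set $\mathscr{A}$ of real $d\times d$ matrices is irreducible if the matrices in $\mathscr{A}$ have no common invariant subspace other than $\{0\}$ and $\mathbb{R}^d$. For $n\ge1$, $\mathscr{A}^n$ is the set of all products $A_{i_n}\cdots A_{i_1}$ with $A_{i_j}\in\mathscr{A}$, and $\mathscr{A}^0=\{I\}$. For a norm $\|\cdot\|$ on $\mathbb{R}^d$, matrices carry the induced operator norm and $\|\mathscr{A}^n\|=\max_{A\in\mathscr{A}^n}\|A\|$ (in particular $\|\mathscr{A}\|=\max_i\|A_i\|$). The joint spectral radius is $\rho(\mathscr{A})=\limsup_{n\to\infty}\|\mathscr{A}^n\|^{1/n}$ (independent of the norm). For $p\ge1$, $\mathscr{A}_p=\bigcup_{k=0}^p\mathscr{A}^k$, and $\mathscr{A}_p(x)=\{Ax: A\in\mathscr{A}_p\}$. $\mathbf{S}(t)$ is the closed ball of radius $t$ centered at $0$ in the norm $\|\cdot\|$. The $p$-measure of irreducibility of $\mathscr{A}$ with respect to $\|\cdot\|$ is \[ \chi_p(\mathscr{A})=\inf_{x\in\mathbb{R}^d,\ \|x\|=1}\ \sup\{t\ge 0:\ \mathbf{S}(t)\subseteq \mathrm{conv}(\mathscr{A}_p(x)\cup\mathscr{A}_p(-x))\}. \] (For $p\ge d-1$, $\chi_p(\mathscr{A})>0$ if and only if $\mathscr{A}$ is irreducible.) *)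

theory Defs
  imports "HOL-Analysis.Analysis" "HOL-Library.Liminf_Limsup"
begin

definition is_norm :: "(real^'d \<Rightarrow> real) \<Rightarrow> bool" where
  "is_norm N \<longleftrightarrow> (\<forall>x. N x = 0 \<longleftrightarrow> x = 0) \<and>
     (\<forall>c x. N (c *\<^sub>R x) = \<bar>c\<bar> * N x) \<and>
     (\<forall>x y. N (x + y) \<le> N x + N y)"

definition opnorm :: "(real^'d \<Rightarrow> real) \<Rightarrow> real^'d^'d \<Rightarrow> real" where
  "opnorm N M = (SUP x\<in>{x. N x = 1}. N (M *v x))"

definition irreducible_set :: "(real^'d^'d) set \<Rightarrow> bool" where
  "irreducible_set \<A> \<longleftrightarrow> (\<forall>V. subspace V \<and> (\<forall>A\<in>\<A>. \<forall>x\<in>V. A *v x \<in> V)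
       \<longrightarrow> V = {0} \<or> V = UNIV)"

fun prods :: "(real^'d^'d) set \<Rightarrow> nat \<Rightarrow> (real^'d^'d) set" where
  "prods \<A> 0 = {mat 1}"
| "prods \<A> (Suc n) = {B ** P | B P. B \<in> \<A> \<and> P \<in> prods \<A> n}"

definition setnorm :: "(real^'d \<Rightarrow> real) \<Rightarrow> (real^'d^'d) set \<Rightarrow> nat \<Rightarrow> real" where
  "setnorm N \<A> n = Max (opnorm N ` prods \<A> n)"

definition jsr :: "(real^'d \<Rightarrow> real) \<Rightarrow> (real^'d^'d) set \<Rightarrow> real" where
  "jsr N \<A> = real_of_ereal (limsup (\<lambda>n. ereal (setnorm N \<A> n powr (1 / real n))))"

definition prods_upto :: "(real^'d^'d) set \<Rightarrow> nat \<Rightarrow> (real^'d^'d) set" where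
  "prods_upto \<A> p = (\<Union>k\<in>{0..p}. prods \<A> k)"

definition chi :: "(real^'d \<Rightarrow> real) \<Rightarrow> (real^'d^'d) set \<Rightarrow> nat \<Rightarrow> real" where
  "chi N \<A> p = (INF x\<in>{x. N x = 1}.
      Sup {t. t \<ge> 0 \<and> {y. N y \<le> t} \<subseteq>
        convex hull ((\<lambda>A. A *v x) ` prods_upto \<A> p \<union> (\<lambda>A. A *v (- x)) ` prods_upto \<A> p)})"

end

theory Submission
  imports Defs
begin

locale nrm = fixes N :: "real^'d \<Rightarrow> real" assumes isn: "is_norm N"
begin

lemma N0[simp]: "N 0 = 0" using isn unfolding is_norm_def by auto
lemma Neq0[simp]: "N x = 0 \<longleftrightarrow> x = 0" using isn unfolding is_norm_def by auto
lemma Nscale: "N (c *\<^sub>R x) = \<bar>c\<bar> * N x" using isn unfolding is_norm_def by auto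
lemma Ntri: "N (x + y) \<le> N x + N y" using isn unfolding is_norm_def by auto
lemma Nminus[simp]: "N (- x) = N x" using Nscale[of "-1" x] by simp
lemma Nge0: "N x \<ge> 0" using Ntri[of x "-x"] by simp
lemma Npos: "x \<noteq> 0 \<Longrightarrow> N x > 0" using Nge0[of x] Neq0[of x] by linarith
lemma Ndiff: "\<bar>N x - N y\<bar> \<le> N (x - y)"
  using Ntri[of "x - y" y] Ntri[of "y - x" x] Nminus[of "x - y"] by (simp add: abs_le_iff)

lemma Nsum: "finite S \<Longrightarrow> N (sum f S) \<le> (\<Sum>i\<in>S. N (f i))"
  by (induction S rule: finite_induct) (auto intro: order_trans[OF Ntri])

definition B where "B = (\<Sum>b\<in>Basis. N b) + 1"

lemma B_pos: "B > 0" unfolding B_def using Nge0 by (simp add: add_nonneg_pos sum_nonneg)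

lemma N_upper: "N x \<le> B * norm x"
proof -
  have "N x = N (\<Sum>b\<in>Basis. inner x b *\<^sub>R b)" by (simp add: euclidean_representation)
  also have "\<dots> \<le> (\<Sum>b\<in>Basis. N (inner x b *\<^sub>R b))" by (rule Nsum) simp
  also have "\<dots> = (\<Sum>b\<in>Basis. \<bar>inner x b\<bar> * N b)" by (simp add: Nscale)
  also have "\<dots> \<le> (\<Sum>b\<in>Basis. norm x * N b)"
    by (rule sum_mono) (simp add: Basis_le_norm Nge0 mult_right_mono)
  also have "\<dots> \<le> B * norm x" unfolding B_def
    by (simp add: sum_distrib_left[symmetric] sum_distrib_right[symmetric] algebra_simps)
  finally show ?thesis .
qed

lemma N_cont: "continuous_on S N"
  unfolding continuous_on_iff
proof (intro ballI allI impI)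
  fix x e assume "(e::real) > 0"
  show "\<exists>d>0. \<forall>x'\<in>S. dist x' x < d \<longrightarrow> dist (N x') (N x) < e"
  proof (intro exI[of _ "e / B"] conjI ballI impI)
    show "e / B > 0" using \<open>e>0\<close> B_pos by simp
    fix x' assume "dist x' x < e / B"
    hence "B * norm (x' - x) < e" using B_pos by (simp add: dist_norm field_simps)
    moreover have "dist (N x') (N x) \<le> B * norm (x' - x)"
      using Ndiff[of x' x] N_upper[of "x' - x"] by (simp add: dist_real_def)
    ultimately show "dist (N x') (N x) < e" by linarith
  qed
qed

lemma N_lower_ex: "\<exists>a>0. \<forall>x. a * norm x \<le> N x"
proof -
  have "compact (sphere (0::real^'d) 1)" by simp
  moreover have "sphere (0::real^'d) 1 \<noteq> {}" by (simp add: sphere_def) (metis norm_Basis SOME_Basis)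
  ultimately obtain x0 where x0: "x0 \<in> sphere 0 1" "\<forall>y\<in>sphere 0 1. N x0 \<le> N y"
    using continuous_attains_inf[OF _ _ N_cont] by blast
  have "x0 \<noteq> 0" using x0 by auto
  hence a: "N x0 > 0" by (rule Npos)
  show ?thesis
  proof (intro exI[of _ "N x0"] conjI allI a)
    fix x :: "real^'d"
    show "N x0 * norm x \<le> N x"
    proof (cases "x = 0")
      case False
      have "(1 / norm x) *\<^sub>R x \<in> sphere 0 1" using False by simp
      hence "N x0 \<le> N ((1 / norm x) *\<^sub>R x)" using x0 by blast
      also have "\<dots> = N x / norm x" by (simp add: Nscale)
      finally show ?thesis using False by (simp add: field_simps)
    qed simp
  qed
qed

definition aN where "aN = (SOME a. a > 0 \<and> (\<forall>x. a * norm x \<le> N x))"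
lemma a_pos: "aN > 0" and N_lower: "aN * norm x \<le> N x"
  using someI_ex[OF N_lower_ex] unfolding aN_def[symmetric] by auto

lemma unit_ex: "\<exists>x. N x = 1"
proof -
  have "(1::real^'d) \<noteq> 0" by (simp add: vec_eq_iff)
  then obtain v :: "real^'d" where "v \<noteq> 0" by blast
  hence "N ((1 / N v) *\<^sub>R v) = 1" using Npos[of v] by (simp add: Nscale)
  thus ?thesis by blast
qed

lemma Mbound: "N (M *v x) \<le> (B * onorm ((*v) M) / aN) * N x"
proof -
  have "N (M *v x) \<le> B * norm (M *v x)" by (rule N_upper)
  also have "\<dots> \<le> B * (onorm ((*v) M) * norm x)"
    using onorm[OF matrix_vector_mul_bounded_linear[of M], of x] B_pos by simp
  also have "\<dots> \<le> B * (onorm ((*v) M) * (N x / aN))"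
    using N_lower[of x] a_pos B_pos onorm_pos_le[OF matrix_vector_mul_bounded_linear[of M]]
    by (intro mult_left_mono) (auto simp: field_simps)
  finally show ?thesis by (simp add: field_simps)
qed

lemma opnorm_bdd: "bdd_above ((\<lambda>x. N (M *v x)) ` {x. N x = 1})"
proof (intro bdd_aboveI2[where M="B * onorm ((*v) M) / aN"])
  fix x :: "real^'d" assume "x \<in> {x. N x = 1}"
  thus "N (M *v x) \<le> B * onorm ((*v) M) / aN" using Mbound[of M x] by simp
qed

lemma opnorm_ge: "N x = 1 \<Longrightarrow> N (M *v x) \<le> opnorm N M"
  unfolding opnorm_def by (rule cSUP_upper[OF _ opnorm_bdd]) simp

lemma opnorm_app: "N (M *v x) \<le> opnorm N M * N x"
proof (cases "x = 0")
  case False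
  have "N ((1 / N x) *\<^sub>R x) = 1" using Npos[OF False] False by (simp add: Nscale)
  hence "N (M *v ((1 / N x) *\<^sub>R x)) \<le> opnorm N M" by (rule opnorm_ge)
  hence "N (M *v x) / N x \<le> opnorm N M" using Npos[OF False] by (simp add: matrix_vector_mult_scaleR Nscale)
  thus ?thesis using Npos[OF False] False by (simp add: field_simps)
qed (simp add: Nge0)

lemma opnorm_le: "(\<And>x. N x = 1 \<Longrightarrow> N (M *v x) \<le> c) \<Longrightarrow> opnorm N M \<le> c"
  unfolding opnorm_def using unit_ex by (intro cSUP_least) auto

lemma opnorm_nonneg: "opnorm N M \<ge> 0"
  using unit_ex opnorm_ge[of _ M] Nge0 by (meson order_trans)

lemma opnorm_mult: "opnorm N (P ** Q) \<le> opnorm N P * opnorm N Q"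
proof (rule opnorm_le)
  fix x assume "N x = 1"
  have "N ((P ** Q) *v x) = N (P *v (Q *v x))" by (simp add: matrix_vector_mul_assoc)
  also have "\<dots> \<le> opnorm N P * N (Q *v x)" by (rule opnorm_app)
  also have "\<dots> \<le> opnorm N P * opnorm N Q"
    using opnorm_ge[OF \<open>N x = 1\<close>, of Q] opnorm_nonneg[of P] by (rule mult_left_mono)
  finally show "N ((P ** Q) *v x) \<le> opnorm N P * opnorm N Q" .
qed

lemma opnorm_id: "opnorm N (mat 1) = 1"
proof (rule antisym)
  show "opnorm N (mat 1) \<le> 1" by (rule opnorm_le) simp
  obtain x where "N x = 1" using unit_ex by blast
  thus "1 \<le> opnorm N (mat 1)" using opnorm_ge[of x "mat 1"] by simp
qed

end

lemma prods_add: "prods \<A> (a + b) = {C ** P | C P. C \<in> prods \<A> a \<and> P \<in> prods \<A> b}"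
proof (induction a)
  case 0
  show ?case by (auto simp: matrix_mul_lid)
next
  case (Suc a)
  have "prods \<A> (Suc a + b) = {D ** Q | D Q. D \<in> \<A> \<and> Q \<in> prods \<A> (a + b)}" by simp
  also have "\<dots> = {C ** P | C P. C \<in> prods \<A> (Suc a) \<and> P \<in> prods \<A> b}"
  proof (intro set_eqI iffI)
    fix X assume "X \<in> {D ** Q | D Q. D \<in> \<A> \<and> Q \<in> prods \<A> (a + b)}"
    then obtain D Q where "X = D ** Q" "D \<in> \<A>" "Q \<in> prods \<A> (a + b)" by blast
    moreover then obtain C P where "Q = C ** P" "C \<in> prods \<A> a" "P \<in> prods \<A> b"
      using Suc.IH by blast
    ultimately show "X \<in> {C ** P | C P. C \<in> prods \<A> (Suc a) \<and> P \<in> prods \<A> b}"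
      by (auto simp: matrix_mul_assoc)
  next
    fix X assume "X \<in> {C ** P | C P. C \<in> prods \<A> (Suc a) \<and> P \<in> prods \<A> b}"
    then obtain C P where "X = C ** P" "C \<in> prods \<A> (Suc a)" "P \<in> prods \<A> b" by blast
    moreover then obtain D Q where "C = D ** Q" "D \<in> \<A>" "Q \<in> prods \<A> a" by auto
    ultimately have "X = D ** (Q ** P)" "Q ** P \<in> prods \<A> (a + b)" "D \<in> \<A>"
      using Suc.IH by (auto simp: matrix_mul_assoc)
    thus "X \<in> {D ** Q | D Q. D \<in> \<A> \<and> Q \<in> prods \<A> (a + b)}" by blast
  qed
  finally show ?case .
qed

lemma finite_prods: "finite \<A> \<Longrightarrow> finite (prods \<A> k)"
proof (induction k)
  case (Suc k)
  have "prods \<A> (Suc k) = (\<lambda>(B, P). B ** P) ` (\<A> \<times> prods \<A> k)" by auto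
  thus ?case using Suc by simp
qed simp

lemma prods_ne: "\<A> \<noteq> {} \<Longrightarrow> prods \<A> k \<noteq> {}"
  by (induction k) auto

lemma finite_prods_upto: "finite \<A> \<Longrightarrow> finite (prods_upto \<A> p)"
  unfolding prods_upto_def using finite_prods by blast

lemma id_prods_upto: "mat 1 \<in> prods_upto \<A> p"
  unfolding prods_upto_def by force

locale jsys = nrm N for N :: "real^'d \<Rightarrow> real" +
  fixes \<A> :: "(real^'d^'d) set"
  assumes fin: "finite \<A>" and ne: "\<A> \<noteq> {}"
begin

lemma setnorm_attained: "\<exists>C\<in>prods \<A> k. setnorm N \<A> k = opnorm N C"
proof -
  have "Max (opnorm N ` prods \<A> k) \<in> opnorm N ` prods \<A> k"
    using finite_prods[OF fin] prods_ne[OF ne] by (intro Max_in) auto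
  thus ?thesis unfolding setnorm_def by auto
qed

lemma setnorm_ge: "C \<in> prods \<A> k \<Longrightarrow> opnorm N C \<le> setnorm N \<A> k"
  unfolding setnorm_def using finite_prods[OF fin] by auto

lemma setnorm_nonneg: "setnorm N \<A> k \<ge> 0"
  using setnorm_attained[of k] opnorm_nonneg by auto

lemma setnorm_mult: "setnorm N \<A> (a + b) \<le> setnorm N \<A> a * setnorm N \<A> b"
proof -
  obtain D where D: "D \<in> prods \<A> (a + b)" "setnorm N \<A> (a + b) = opnorm N D"
    using setnorm_attained by blast
  then obtain C P where CP: "D = C ** P" "C \<in> prods \<A> a" "P \<in> prods \<A> b"
    unfolding prods_add by blast
  have "opnorm N D \<le> opnorm N C * opnorm N P" using CP opnorm_mult by simp
  also have "\<dots> \<le> setnorm N \<A> a * setnorm N \<A> b"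
    using CP setnorm_ge opnorm_nonneg setnorm_nonneg by (intro mult_mono) auto
  finally show ?thesis using D by simp
qed

lemma setnorm_0: "setnorm N \<A> 0 = 1"
  unfolding setnorm_def by (simp add: opnorm_id)

lemma setnorm_pow: "setnorm N \<A> (k * n) \<le> setnorm N \<A> n ^ k"
proof (induction k)
  case 0 thus ?case by (simp add: setnorm_0)
next
  case (Suc k)
  have "setnorm N \<A> (Suc k * n) = setnorm N \<A> (n + k * n)" by (simp add: add.commute)
  also have "\<dots> \<le> setnorm N \<A> n * setnorm N \<A> (k * n)" by (rule setnorm_mult)
  also have "\<dots> \<le> setnorm N \<A> n * setnorm N \<A> n ^ k"
    using Suc setnorm_nonneg by (intro mult_left_mono) auto
  finally show ?case by simp
qed

lemma setnorm_pow1: "setnorm N \<A> k \<le> setnorm N \<A> 1 ^ k"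
  using setnorm_pow[of k 1] by simp

end

lemma mv_neg: "(A::real^'n^'m) *v (- x) = - (A *v x)"
  by (metis scaleR_minus1_left matrix_vector_mult_scaleR)

lemma pow_powr_inv: "0 \<le> (q::real) \<Longrightarrow> n > 0 \<Longrightarrow> (q ^ n) powr (1 / real n) = q"
proof (cases "q = 0")
  case False
  assume "0 \<le> q" "n > 0"
  hence "q > 0" using False by simp
  hence "q ^ n = q powr real n" by (simp add: powr_realpow)
  thus ?thesis using \<open>q > 0\<close> \<open>n > 0\<close> by (simp add: powr_powr)
qed simp

lemma limsup_le_ev:
  assumes "eventually (\<lambda>n. f n \<le> g n) sequentially" "(g \<longlongrightarrow> c) sequentially"
  shows "limsup (\<lambda>n. ereal (f n)) \<le> ereal c"
proof -
  have "limsup (\<lambda>n. ereal (f n)) \<le> limsup (\<lambda>n. ereal (g n))"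
    using assms(1) by (intro Limsup_mono) (auto elim: eventually_mono)
  also have "limsup (\<lambda>n. ereal (g n)) = ereal c"
    using assms(2) by (intro lim_imp_Limsup) auto
  finally show ?thesis .
qed

lemma limsup_ge_freq:
  assumes "\<And>M. \<exists>L\<ge>M. c \<le> f L"
  shows "ereal c \<le> limsup (\<lambda>n. ereal (f n))"
  unfolding limsup_INF_SUP
proof (rule INF_greatest)
  fix M :: nat
  obtain L where "L \<ge> M" "c \<le> f L" using assms by blast
  thus "ereal c \<le> (SUP m\<in>{M..}. ereal (f m))" by (intro SUP_upper2[of L]) auto
qed

context jsys begin

abbreviation "q \<equiv> setnorm N \<A> 1"

lemma f_nonneg: "setnorm N \<A> L powr (1 / real L) \<ge> 0" by simp

lemma f_bound: "L \<ge> 1 \<Longrightarrow> setnorm N \<A> L powr (1 / real L) \<le> q"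
proof -
  assume "L \<ge> 1"
  have "setnorm N \<A> L powr (1 / real L) \<le> (q ^ L) powr (1 / real L)"
    using setnorm_pow1[of L] setnorm_nonneg by (intro powr_mono2) auto
  also have "\<dots> = q" using \<open>L \<ge> 1\<close> setnorm_nonneg by (intro pow_powr_inv) auto
  finally show ?thesis .
qed

lemma limsup_bounds:
  "0 \<le> limsup (\<lambda>L. ereal (setnorm N \<A> L powr (1 / real L)))"
  "limsup (\<lambda>L. ereal (setnorm N \<A> L powr (1 / real L))) \<le> ereal q"
proof -
  show "0 \<le> limsup (\<lambda>L. ereal (setnorm N \<A> L powr (1 / real L)))"
  proof -
    have "ereal 0 \<le> limsup (\<lambda>L. ereal (setnorm N \<A> L powr (1 / real L)))"
      by (rule limsup_ge_freq) auto
    thus ?thesis by (simp add: zero_ereal_def)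
  qed
  show "limsup (\<lambda>L. ereal (setnorm N \<A> L powr (1 / real L))) \<le> ereal q"
    using f_bound by (intro limsup_le_ev[where g="\<lambda>_. q"]) (auto simp: eventually_sequentially)
qed

lemma jsr_eq: "limsup (\<lambda>L. ereal (setnorm N \<A> L powr (1 / real L))) = ereal (jsr N \<A>)"
  and jsr_nonneg: "jsr N \<A> \<ge> 0" and jsr_le_q: "jsr N \<A> \<le> q"
proof -
  obtain r where r: "limsup (\<lambda>L. ereal (setnorm N \<A> L powr (1 / real L))) = ereal r"
    using limsup_bounds by (cases "limsup (\<lambda>L. ereal (setnorm N \<A> L powr (1 / real L)))") auto
  thus "limsup (\<lambda>L. ereal (setnorm N \<A> L powr (1 / real L))) = ereal (jsr N \<A>)"
    unfolding jsr_def by simp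
  show "jsr N \<A> \<ge> 0" "jsr N \<A> \<le> q" using limsup_bounds r unfolding jsr_def by auto
qed

lemma jsr_le_lim:
  assumes "eventually (\<lambda>n. setnorm N \<A> n powr (1 / real n) \<le> g n) sequentially" "(g \<longlongrightarrow> c) sequentially"
  shows "jsr N \<A> \<le> c"
  using limsup_le_ev[OF assms] jsr_eq by simp

lemma jsr_ge_freq:
  assumes "\<And>M. \<exists>L\<ge>M. c \<le> setnorm N \<A> L powr (1 / real L)"
  shows "c \<le> jsr N \<A>"
  using limsup_ge_freq[OF assms] jsr_eq by simp

lemma part1:
  assumes "n \<ge> 1"
  shows "jsr N \<A> \<le> setnorm N \<A> n powr (1 / real n)"
proof (cases "setnorm N \<A> n = 0")
  case True
  have "eventually (\<lambda>L. setnorm N \<A> L powr (1 / real L) \<le> 0) sequentially"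
    unfolding eventually_sequentially
  proof (intro exI[of _ n] allI impI)
    fix L assume "n \<le> L"
    hence "setnorm N \<A> L = setnorm N \<A> (n + (L - n))" by simp
    also have "\<dots> \<le> setnorm N \<A> n * setnorm N \<A> (L - n)" by (rule setnorm_mult)
    finally have "setnorm N \<A> L = 0" using True setnorm_nonneg[of L] by simp
    thus "setnorm N \<A> L powr (1 / real L) \<le> 0" by simp
  qed
  hence "jsr N \<A> \<le> 0" by (rule jsr_le_lim) simp
  thus ?thesis using True by simp
next
  case False
  define s where "s = setnorm N \<A> n"
  have s_pos: "s > 0" using False setnorm_nonneg[of n] unfolding s_def by simp
  define \<sigma> where "\<sigma> = s powr (1 / real n)"
  have sig_pos: "\<sigma> > 0" using s_pos unfolding \<sigma>_def by simp
  have s_eq: "s = \<sigma> ^ n"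
  proof -
    have "\<sigma> ^ n = \<sigma> powr real n" using sig_pos by (simp add: powr_realpow)
    also have "\<dots> = s" using assms s_pos unfolding \<sigma>_def by (simp add: powr_powr)
    finally show ?thesis by simp
  qed
  define E where "E = max 1 (q / \<sigma>) ^ n"
  have E_ge: "E \<ge> 1" unfolding E_def by simp
  define g where "g = (\<lambda>L::nat. \<sigma> * E powr (1 / real L))"
  have "eventually (\<lambda>L. setnorm N \<A> L powr (1 / real L) \<le> g L) sequentially"
    unfolding eventually_sequentially
  proof (intro exI[of _ n] allI impI)
    fix L assume "n \<le> L"
    define k where "k = L div n"
    define r where "r = L mod n"
    have L_eq: "L = k * n + r" unfolding k_def r_def by simp
    have r_lt: "r < n" unfolding r_def using assms by simp
    have "setnorm N \<A> L \<le> setnorm N \<A> (k * n) * setnorm N \<A> r"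
      unfolding L_eq by (rule setnorm_mult)
    also have "\<dots> \<le> s ^ k * q ^ r"
      using setnorm_pow[of k n] setnorm_pow1[of r] setnorm_nonneg unfolding s_def
      by (intro mult_mono) auto
    also have "\<dots> = \<sigma> ^ L * (q / \<sigma>) ^ r"
      unfolding L_eq s_eq using sig_pos
      by (simp add: power_mult[symmetric] power_add power_divide mult.commute)
    also have "\<dots> \<le> \<sigma> ^ L * E"
    proof (intro mult_left_mono)
      have "(q / \<sigma>) ^ r \<le> max 1 (q / \<sigma>) ^ r"
        using sig_pos setnorm_nonneg[of 1] by (intro power_mono) auto
      also have "\<dots> \<le> max 1 (q / \<sigma>) ^ n" using r_lt by (intro power_increasing) auto
      finally show "(q / \<sigma>) ^ r \<le> E" unfolding E_def .
    qed (use sig_pos in simp)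
    finally have le: "setnorm N \<A> L \<le> \<sigma> ^ L * E" .
    have "setnorm N \<A> L powr (1 / real L) \<le> (\<sigma> ^ L * E) powr (1 / real L)"
      using le setnorm_nonneg by (intro powr_mono2) auto
    also have "\<dots> = (\<sigma> ^ L) powr (1 / real L) * E powr (1 / real L)"
      using sig_pos E_ge by (simp add: powr_mult)
    also have "\<dots> = g L" unfolding g_def using \<open>n \<le> L\<close> assms sig_pos
      by (subst pow_powr_inv) auto
    finally show "setnorm N \<A> L powr (1 / real L) \<le> g L" .
  qed
  moreover have "(g \<longlongrightarrow> \<sigma> * E powr 0) sequentially"
    unfolding g_def using E_ge by (intro tendsto_intros) auto
  ultimately have "jsr N \<A> \<le> \<sigma> * E powr 0" by (rule jsr_le_lim)
  thus ?thesis using E_ge unfolding \<sigma>_def s_def by simp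
qed

abbreviation "K p x \<equiv> convex hull ((\<lambda>A. A *v x) ` prods_upto \<A> p \<union> (\<lambda>A. A *v (- x)) ` prods_upto \<A> p)"
abbreviation "T p x \<equiv> {t. t \<ge> 0 \<and> {y. N y \<le> t} \<subseteq> K p x}"

lemma K_bounded: "\<exists>R. \<forall>y\<in>K p x. norm y \<le> R"
proof -
  have "compact (K p x)" using finite_prods_upto[OF fin] by (intro finite_imp_compact_convex_hull) auto
  thus ?thesis using compact_imp_bounded bounded_iff by blast
qed

lemma T_bdd: "bdd_above (T p x)"
proof -
  obtain R where R: "\<forall>y\<in>K p x. norm y \<le> R" using K_bounded by blast
  obtain u where u: "N u = 1" using unit_ex by blast
  show ?thesis
  proof (intro bdd_aboveI[where M="B * R"])
    fix t assume "t \<in> T p x"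
    hence t: "t \<ge> 0" "{y. N y \<le> t} \<subseteq> K p x" by auto
    have "N (t *\<^sub>R u) = t" using u t by (simp add: Nscale)
    hence "t *\<^sub>R u \<in> K p x" using t by auto
    hence "norm (t *\<^sub>R u) \<le> R" using R by blast
    hence "B * norm (t *\<^sub>R u) \<le> B * R" using B_pos by (intro mult_left_mono) auto
    thus "t \<le> B * R" using N_upper[of "t *\<^sub>R u"] \<open>N (t *\<^sub>R u) = t\<close> by linarith
  qed
qed

lemma zero_T: "0 \<in> T p x"
proof -
  have "x \<in> K p x" using id_prods_upto by (intro hull_inc) force
  moreover have "- x \<in> K p x" using id_prods_upto by (intro hull_inc) force
  ultimately have "(1/2) *\<^sub>R x + (1/2) *\<^sub>R (- x) \<in> K p x"
    by (intro convexD[OF convex_convex_hull]) auto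
  hence "0 \<in> K p x" by simp
  moreover have "y = 0" if "N y \<le> 0" for y using that Nge0[of y] by simp
  ultimately show ?thesis by auto
qed

lemma chi_le: "N x = 1 \<Longrightarrow> chi N \<A> p \<le> Sup (T p x)"
  unfolding chi_def
proof (rule cINF_lower)
  show "bdd_below ((\<lambda>x. Sup (T p x)) ` {x. N x = 1})"
    using zero_T T_bdd by (intro bdd_belowI2[where m=0]) (meson cSup_upper)
qed auto

lemma chi_nonneg: "chi N \<A> p \<ge> 0"
  unfolding chi_def
proof (rule cINF_greatest)
  show "{x. N x = 1} \<noteq> {}" using unit_ex by auto
  fix x show "0 \<le> Sup (T p x)" using zero_T T_bdd by (meson cSup_upper)
qed

lemma key:
  assumes chi_pos: "chi N \<A> p > 0" and x: "N x = 1"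
  shows "\<exists>A\<in>prods_upto \<A> p. chi N \<A> p * opnorm N C \<le> N (C *v (A *v x))"
proof -
  let ?P = "prods_upto \<A> p"
  let ?h = "\<lambda>A. N (C *v (A *v x))"
  define M where "M = Max (?h ` ?P)"
  have "M \<in> ?h ` ?P" unfolding M_def using finite_prods_upto[OF fin] id_prods_upto
    by (intro Max_in) auto
  then obtain A0 where A0: "A0 \<in> ?P" "M = ?h A0" by auto
  have hM: "?h A \<le> M" if "A \<in> ?P" for A
    unfolding M_def using finite_prods_upto[OF fin] that by auto
  have cvx: "convex_on (K p x) (\<lambda>v. N (C *v v))"
  proof (rule convex_on_subset[of UNIV])
    show "convex_on UNIV (\<lambda>v. N (C *v v))"
    proof (rule convex_onI)
      fix t :: real and u v :: "real^'d" assume "t > 0" "t < 1"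
      have "N (C *v ((1 - t) *\<^sub>R u + t *\<^sub>R v)) = N ((1 - t) *\<^sub>R (C *v u) + t *\<^sub>R (C *v v))"
        by (simp add: matrix_vector_right_distrib matrix_vector_mult_scaleR)
      also have "\<dots> \<le> N ((1 - t) *\<^sub>R (C *v u)) + N (t *\<^sub>R (C *v v))" by (rule Ntri)
      also have "\<dots> = (1 - t) * N (C *v u) + t * N (C *v v)"
        using \<open>t > 0\<close> \<open>t < 1\<close> by (simp add: Nscale)
      finally show "N (C *v ((1 - t) *\<^sub>R u + t *\<^sub>R v)) \<le> (1 - t) * N (C *v u) + t * N (C *v v)" .
    qed simp
  qed auto
  have bnd: "\<forall>v\<in>K p x. N (C *v v) \<le> M"
  proof (rule convex_on_convex_hull_bound[OF cvx])
    show "\<forall>v\<in>(\<lambda>A. A *v x) ` ?P \<union> (\<lambda>A. A *v (- x)) ` ?P. N (C *v v) \<le> M"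
      using hM by (auto simp: mv_neg)
  qed
  have yb: "chi N \<A> p * N (C *v y) \<le> M" if y: "N y = 1" for y
  proof (rule ccontr)
    assume "\<not> ?thesis"
    hence gt: "chi N \<A> p * N (C *v y) > M" by simp
    have M0: "M \<ge> 0" using A0 Nge0 by simp
    hence Cy: "N (C *v y) > 0" using gt chi_pos
      by (smt (verit) Nge0 mult_nonneg_nonpos)
    define t where "t = (M / N (C *v y) + chi N \<A> p) / 2"
    have "M / N (C *v y) < chi N \<A> p" using gt Cy by (simp add: field_simps)
    hence t1: "t < chi N \<A> p" and t0: "t \<ge> 0" and t2: "t * N (C *v y) > M"
      unfolding t_def using M0 Cy gt chi_pos divide_nonneg_pos[OF M0 Cy] by (auto simp: field_simps)
    have "t < Sup (T p x)" using t1 chi_le[OF x, of p] by simp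
    then obtain t' where t': "t' \<in> T p x" "t < t'" using less_cSupD[of "T p x"] zero_T by blast
    have "N (t *\<^sub>R y) \<le> t'" using t' t0 y by (simp add: Nscale)
    hence "t *\<^sub>R y \<in> K p x" using t' by blast
    hence "N (C *v (t *\<^sub>R y)) \<le> M" using bnd by blast
    thus False using t2 t0 by (simp add: matrix_vector_mult_scaleR Nscale)
  qed
  have "opnorm N C \<le> M / chi N \<A> p"
    using yb chi_pos by (intro opnorm_le) (simp add: field_simps mult.commute)
  hence "chi N \<A> p * opnorm N C \<le> M" using chi_pos by (simp add: field_simps mult.commute)
  thus ?thesis using A0 by auto
qed

lemma step:
  assumes chi_pos: "chi N \<A> p > 0"
  shows "\<exists>k\<le>p. \<exists>Q\<in>prods \<A> (m + k). chi N \<A> p * setnorm N \<A> m * N z \<le> N (Q *v z)"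
proof -
  obtain C where C: "C \<in> prods \<A> m" "setnorm N \<A> m = opnorm N C" using setnorm_attained by blast
  show ?thesis
  proof (cases "z = 0")
    case True thus ?thesis using C by (intro exI[of _ 0]) auto
  next
    case False
    hence Nz: "N z > 0" by (rule Npos)
    define u where "u = (1 / N z) *\<^sub>R z"
    have u: "N u = 1" unfolding u_def using Nz False by (simp add: Nscale)
    obtain A where A: "A \<in> prods_upto \<A> p" "chi N \<A> p * opnorm N C \<le> N (C *v (A *v u))"
      using key[OF chi_pos u] by blast
    then obtain k where k: "k \<le> p" "A \<in> prods \<A> k" unfolding prods_upto_def by auto
    have Q: "C ** A \<in> prods \<A> (m + k)" unfolding prods_add using C k by blast
    have "N ((C ** A) *v z) = N z * N (C *v (A *v u))"
    proof -
      have "z = N z *\<^sub>R u" unfolding u_def using Nz by simp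
      hence "(C ** A) *v z = N z *\<^sub>R (C *v (A *v u))"
        by (metis matrix_vector_mul_assoc matrix_vector_mult_scaleR)
      thus ?thesis using Nz by (simp add: Nscale)
    qed
    hence "chi N \<A> p * setnorm N \<A> m * N z \<le> N ((C ** A) *v z)"
      using A(2) C(2) Nz by (simp add: mult.commute mult_left_mono)
    thus ?thesis using Q k by blast
  qed
qed

lemma chain:
  assumes chi_pos: "chi N \<A> p > 0"
  shows "\<exists>L. j * m \<le> L \<and> L \<le> j * (m + p) \<and>
           (\<exists>Q\<in>prods \<A> L. (chi N \<A> p * setnorm N \<A> m) ^ j * N z \<le> N (Q *v z))"
proof (induction j arbitrary: z)
  case 0 thus ?case by (intro exI[of _ 0]) auto
next
  case (Suc j)
  let ?c = "chi N \<A> p * setnorm N \<A> m"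
  have c0: "?c \<ge> 0" using chi_pos setnorm_nonneg by simp
  obtain L Q where LQ: "j * m \<le> L" "L \<le> j * (m + p)" "Q \<in> prods \<A> L" "?c ^ j * N z \<le> N (Q *v z)"
    using Suc.IH[of z] by blast
  obtain k Q' where kQ: "k \<le> p" "Q' \<in> prods \<A> (m + k)" "?c * N (Q *v z) \<le> N (Q' *v (Q *v z))"
    using step[OF chi_pos, of m "Q *v z"] by blast
  have in_prods: "Q' ** Q \<in> prods \<A> ((m + k) + L)" using prods_add[of \<A> "m + k" L] LQ(3) kQ(2) by blast
  have "?c ^ Suc j * N z = ?c * (?c ^ j * N z)" by simp
  also have "\<dots> \<le> ?c * N (Q *v z)" using LQ(4) c0 by (rule mult_left_mono)
  also have "\<dots> \<le> N ((Q' ** Q) *v z)" using kQ(3) by (simp add: matrix_vector_mul_assoc)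
  finally show ?case using LQ kQ in_prods
    by (intro exI[of _ "(m + k) + L"]) (auto simp: algebra_simps)
qed

lemma root_ge:
  assumes "0 < c" "0 \<le> \<rho>" "c powr (1 / real k0) \<le> \<rho>" "k0 > 0"
  shows "c \<le> \<rho> ^ k0"
proof -
  have "c = (c powr (1 / real k0)) powr real k0" using assms by (simp add: powr_powr)
  also have "\<dots> = (c powr (1 / real k0)) ^ k0" using assms by (simp add: powr_realpow)
  also have "\<dots> \<le> \<rho> ^ k0" using assms by (intro power_mono) auto
  finally show ?thesis .
qed

lemma part2_core:
  assumes chi_pos: "chi N \<A> p > 0" and n: "n \<ge> 1"
  shows "chi N \<A> p * setnorm N \<A> n \<le> jsr N \<A> ^ n * max 1 (jsr N \<A> ^ p)"
proof -
  define c where "c = chi N \<A> p * setnorm N \<A> n"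
  define \<rho> where "\<rho> = jsr N \<A>"
  have r0: "\<rho> \<ge> 0" unfolding \<rho>_def by (rule jsr_nonneg)
  obtain z where z: "N z = 1" using unit_ex by blast
  have big: "\<exists>L. j * n \<le> L \<and> L \<le> j * (n + p) \<and> c ^ j \<le> setnorm N \<A> L" for j
  proof -
    obtain L Q where "j * n \<le> L" "L \<le> j * (n + p)" "Q \<in> prods \<A> L" "c ^ j * N z \<le> N (Q *v z)"
      using chain[OF chi_pos, of j n z] unfolding c_def by blast
    moreover have "N (Q *v z) \<le> setnorm N \<A> L"
      using opnorm_ge[OF z, of Q] setnorm_ge[OF \<open>Q \<in> prods \<A> L\<close>] by linarith
    ultimately show ?thesis using z by auto
  qed
  have fL: "c powr (real j / real L) \<le> setnorm N \<A> L powr (1 / real L)"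
    if "c > 0" "c ^ j \<le> setnorm N \<A> L" for j L
  proof -
    have "c powr (real j / real L) = (c ^ j) powr (1 / real L)"
      using that by (simp add: powr_realpow[symmetric] powr_powr)
    also have "\<dots> \<le> setnorm N \<A> L powr (1 / real L)" using that by (intro powr_mono2) auto
    finally show ?thesis .
  qed
  show ?thesis
  proof (cases "c > 0")
    case False
    hence "c \<le> 0" by simp
    moreover have "0 \<le> \<rho> ^ n * max 1 (\<rho> ^ p)" using r0 by simp
    ultimately show ?thesis unfolding c_def \<rho>_def by linarith
  next
    case cpos: True
    show ?thesis
    proof (cases "c \<ge> 1")
      case True
      have "c powr (1 / real (n + p)) \<le> \<rho>" unfolding \<rho>_def
      proof (rule jsr_ge_freq)
        fix M
        obtain L where L: "Suc M * n \<le> L" "L \<le> Suc M * (n + p)" "c ^ Suc M \<le> setnorm N \<A> L"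
          using big by blast
        have "Suc M \<le> Suc M * n" using n mult_le_mono2[of 1 n "Suc M"] by simp
        hence LM: "L \<ge> M" and Lpos: "L > 0" using L(1) by linarith+
        have rL: "real L \<le> real (Suc M) * real (n + p)" using L(2) by (metis of_nat_le_iff of_nat_mult)
        have "1 / real (n + p) \<le> real (Suc M) / real L"
          using rL Lpos n by (simp add: divide_simps mult.commute)
        hence "c powr (1 / real (n + p)) \<le> c powr (real (Suc M) / real L)"
          using True by (intro powr_mono) auto
        also have "\<dots> \<le> setnorm N \<A> L powr (1 / real L)" using fL[OF cpos L(3)] .
        finally show "\<exists>L\<ge>M. c powr (1 / real (n + p)) \<le> setnorm N \<A> L powr (1 / real L)"
          using LM by blast
      qed
      hence "c \<le> \<rho> ^ (n + p)" using cpos r0 n by (intro root_ge) auto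
      also have "\<dots> = \<rho> ^ n * \<rho> ^ p" by (simp add: power_add)
      also have "\<dots> \<le> \<rho> ^ n * max 1 (\<rho> ^ p)" using r0 by (intro mult_left_mono) auto
      finally show ?thesis unfolding c_def \<rho>_def .
    next
      case False
      have "c powr (1 / real n) \<le> \<rho>" unfolding \<rho>_def
      proof (rule jsr_ge_freq)
        fix M
        obtain L where L: "Suc M * n \<le> L" "L \<le> Suc M * (n + p)" "c ^ Suc M \<le> setnorm N \<A> L"
          using big by blast
        have "Suc M \<le> Suc M * n" using n mult_le_mono2[of 1 n "Suc M"] by simp
        hence LM: "L \<ge> M" and Lpos: "L > 0" using L(1) by linarith+
        have rL: "real (Suc M) * real n \<le> real L" using L(1) by (metis of_nat_le_iff of_nat_mult)
        have "real (Suc M) / real L \<le> 1 / real n"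
          using rL Lpos n by (simp add: divide_simps mult.commute)
        hence "c powr (1 / real n) \<le> c powr (real (Suc M) / real L)"
          using False cpos by (intro powr_mono') auto
        also have "\<dots> \<le> setnorm N \<A> L powr (1 / real L)" using fL[OF cpos L(3)] .
        finally show "\<exists>L\<ge>M. c powr (1 / real n) \<le> setnorm N \<A> L powr (1 / real L)"
          using LM by blast
      qed
      hence "c \<le> \<rho> ^ n" using cpos r0 n by (intro root_ge) auto
      also have "\<dots> \<le> \<rho> ^ n * max 1 (\<rho> ^ p)" using r0 mult_left_mono[of 1 "max 1 (\<rho> ^ p)" "\<rho> ^ n"] by simp
      finally show ?thesis unfolding c_def \<rho>_def .
    qed
  qed
qed

lemma krylov:
  assumes irr: "irreducible_set \<A>" and pd: "CARD('d) - 1 \<le> p" and x: "x \<noteq> 0"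
  shows "span ((\<lambda>A. A *v x) ` prods_upto \<A> p) = UNIV"
proof -
  define S where "S k = (\<lambda>A. A *v x) ` prods_upto \<A> k" for k
  have mono: "S k \<subseteq> S k'" if "k \<le> k'" for k k'
  proof -
    have "prods_upto \<A> k \<subseteq> prods_upto \<A> k'" unfolding prods_upto_def using that
      by (intro UN_mono) auto
    thus ?thesis unfolding S_def by (rule image_mono)
  qed
  have xS: "x \<in> S k" for k unfolding S_def using id_prods_upto by force
  have inv: "span (S k) = UNIV" if eq: "span (S (Suc k)) = span (S k)" for k
  proof -
    have "\<forall>B\<in>\<A>. \<forall>v\<in>span (S k). B *v v \<in> span (S k)"
    proof (intro ballI)
      fix B v assume B: "B \<in> \<A>" and v: "v \<in> span (S k)"
      have img: "(\<lambda>v. B *v v) ` S k \<subseteq> S (Suc k)"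
      proof
        fix w assume "w \<in> (\<lambda>v. B *v v) ` S k"
        then obtain C j where "w = B *v (C *v x)" "C \<in> prods \<A> j" "j \<le> k"
          unfolding S_def prods_upto_def by auto
        hence "w = (B ** C) *v x" "B ** C \<in> prods \<A> (Suc j)" "Suc j \<le> Suc k"
          using B by (auto simp: matrix_vector_mul_assoc)
        thus "w \<in> S (Suc k)" unfolding S_def prods_upto_def by force
      qed
      have "B *v v \<in> (\<lambda>v. B *v v) ` span (S k)" using v by blast
      also have "\<dots> = span ((\<lambda>v. B *v v) ` S k)"
        by (rule span_linear_image[symmetric]) (rule matrix_vector_mul_linear)
      also have "\<dots> \<subseteq> span (S (Suc k))" using img by (rule span_mono)
      finally show "B *v v \<in> span (S k)" using eq by simp
    qed
    hence "span (S k) = {0} \<or> span (S k) = UNIV" using irr unfolding irreducible_set_def by auto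
    moreover have "x \<in> span (S k)" using xS by (simp add: span_base)
    ultimately show ?thesis using x by auto
  qed
  show ?thesis
  proof (rule ccontr)
    assume nf: "span ((\<lambda>A. A *v x) ` prods_upto \<A> p) \<noteq> UNIV"
    have strict: "dim (S k) < dim (S (Suc k))" if "k \<le> p" for k
    proof -
      have "span (S k) \<noteq> UNIV"
      proof
        assume "span (S k) = UNIV"
        hence "span (S p) = UNIV" using span_mono[OF mono[OF that]] by auto
        thus False using nf unfolding S_def by simp
      qed
      hence "span (S (Suc k)) \<noteq> span (S k)" using inv by blast
      moreover have "span (S k) \<subseteq> span (S (Suc k))" using mono[of k "Suc k"] span_mono by auto
      ultimately show ?thesis by (intro dim_psubset) auto
    qed
    have "k \<le> Suc p \<Longrightarrow> Suc k \<le> dim (S k)" for k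
    proof (induction k)
      case 0
      have "dim {x} \<le> dim (S 0)" using xS by (intro dim_subset) auto
      thus ?case using x by simp
    next
      case (Suc k)
      thus ?case using strict[of k] by simp
    qed
    hence "Suc CARD('d) \<le> dim (S CARD('d))" using pd by simp
    moreover have "dim (S CARD('d)) \<le> CARD('d)" by (rule dim_subset_UNIV_cart)
    ultimately show False by simp
  qed
qed

lemma X_compact: "compact {x. N x = 1}"
proof -
  have "closed {x. N x = 1}" by (rule closed_Collect_eq) (auto intro: N_cont)
  moreover have "bounded {x. N x = 1}"
    unfolding bounded_iff
  proof (intro exI[of _ "1 / aN"] ballI)
    fix x assume "x \<in> {x. N x = 1}"
    thus "norm x \<le> 1 / aN" using N_lower[of x] a_pos by (simp add: field_simps)
  qed
  ultimately show ?thesis by (simp add: compact_eq_bounded_closed)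
qed

lemma chi_pos:
  assumes irr: "irreducible_set \<A>" and pd: "CARD('d) - 1 \<le> p"
  shows "chi N \<A> p > 0"
proof -
  let ?P = "prods_upto \<A> p"
  define G where "G = (\<lambda>z::(real^'d) \<times> (real^'d). \<Sum>A\<in>?P. \<bar>inner (fst z) (A *v snd z)\<bar>)"
  let ?D = "sphere (0::real^'d) 1 \<times> {x. N x = 1}"
  have cD: "compact ?D" using X_compact by (intro compact_Times) auto
  obtain x1 where x1: "N x1 = 1" using unit_ex by blast
  have "(1::real^'d) \<noteq> 0" by (simp add: vec_eq_iff)
  hence "(1 / norm (1::real^'d)) *\<^sub>R (1::real^'d) \<in> sphere 0 1" by simp
  hence neD: "?D \<noteq> {}" using x1 by blast
  have contG: "continuous_on ?D G" unfolding G_def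
    by (intro continuous_intros continuous_on_compose2[OF linear_continuous_on[OF matrix_vector_mul_bounded_linear]]) auto
  obtain z0 where z0: "z0 \<in> ?D" "\<forall>z\<in>?D. G z0 \<le> G z"
    using continuous_attains_inf[OF cD neD contG] by blast
  define \<delta> where "\<delta> = G z0"
  have Gpos: "G z > 0" if zD: "z \<in> ?D" for z
  proof -
    obtain u x where z: "z = (u, x)" "norm u = 1" "N x = 1" using zD by (cases z) auto
    have "x \<noteq> 0" using z by auto
    have "G z \<ge> 0" unfolding G_def by (simp add: sum_nonneg)
    moreover have "G z \<noteq> 0"
    proof
      assume "G z = 0"
      hence "\<forall>A\<in>?P. \<bar>inner u (A *v x)\<bar> = 0" unfolding G_def z
        using finite_prods_upto[OF fin] by (subst (asm) sum_nonneg_eq_0_iff) auto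
      hence orth: "\<And>w. w \<in> (\<lambda>A. A *v x) ` ?P \<Longrightarrow> orthogonal u w" unfolding orthogonal_def by auto
      have "u \<in> span ((\<lambda>A. A *v x) ` ?P)" using krylov[OF irr pd \<open>x \<noteq> 0\<close>] by simp
      hence "orthogonal u u" using orth by (rule orthogonal_to_span)
      thus False using z by (simp add: orthogonal_def)
    qed
    ultimately show ?thesis by simp
  qed
  have d_pos: "\<delta> > 0" unfolding \<delta>_def using Gpos z0 by blast
  define cP where "cP = real (card ?P)"
  have cP_pos: "cP > 0" unfolding cP_def using finite_prods_upto[OF fin] id_prods_upto
    by (metis card_gt_0_iff empty_iff of_nat_0_less_iff)
  define t0 where "t0 = aN * \<delta> / cP"
  have t0_pos: "t0 > 0" unfolding t0_def using a_pos d_pos cP_pos by simp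
  have inT: "t0 \<in> T p x" if x: "N x = 1" for x
  proof -
    have "y \<in> K p x" if y: "N y \<le> t0" for y
    proof (rule ccontr)
      assume ny: "y \<notin> K p x"
      have "closed (K p x)" using finite_prods_upto[OF fin]
        by (intro compact_imp_closed finite_imp_compact_convex_hull) auto
      then obtain w b where wb: "inner w y < b" "\<forall>v\<in>K p x. b < inner w v"
        using separating_hyperplane_closed_point[OF convex_convex_hull _ ny] by blast
      have absv: "\<bar>inner w (A *v x)\<bar> < - b" if "A \<in> ?P" for A
      proof -
        have "A *v x \<in> K p x" "A *v (- x) \<in> K p x" using that by (auto intro: hull_inc)
        hence "b < inner w (A *v x)" "b < inner w (A *v (- x))" using wb by auto
        thus ?thesis by (auto simp: mv_neg)
      qed
      have "0 \<in> K p x" using zero_T[of x p] by force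
      hence b0: "b < 0" using wb by fastforce
      have w0: "w \<noteq> 0" using wb b0 by auto
      have "norm y \<le> N y / aN" using N_lower[of y] a_pos by (simp add: field_simps)
      also have "\<dots> \<le> t0 / aN" using y a_pos by (simp add: divide_right_mono)
      also have "\<dots> = \<delta> / cP" unfolding t0_def using a_pos by simp
      finally have ny_le: "norm y \<le> \<delta> / cP" .
      define u where "u = (1 / norm w) *\<^sub>R w"
      have u1: "norm u = 1" unfolding u_def using w0 by simp
      have "\<delta> \<le> G (u, x)" unfolding \<delta>_def using z0 u1 x by auto
      also have "G (u, x) = (\<Sum>A\<in>?P. \<bar>inner w (A *v x)\<bar>) / norm w"
        unfolding G_def u_def using w0 by (simp add: sum_divide_distrib)
      also have "\<dots> < (\<Sum>A\<in>?P. - b) / norm w"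
        using absv w0 finite_prods_upto[OF fin] id_prods_upto[of \<A> p]
        by (intro divide_strict_right_mono sum_strict_mono) auto
      also have "\<dots> = cP * (- b) / norm w" unfolding cP_def by simp
      also have "\<dots> \<le> cP * \<bar>inner w y\<bar> / norm w"
        using wb b0 cP_pos w0 by (intro divide_right_mono mult_left_mono) auto
      also have "\<dots> \<le> cP * (norm w * norm y) / norm w"
        using Cauchy_Schwarz_ineq2[of w y] cP_pos by (intro divide_right_mono mult_left_mono) auto
      also have "\<dots> = cP * norm y" using w0 by simp
      also have "\<dots> \<le> \<delta>" using ny_le cP_pos by (simp add: field_simps)
      finally show False by simp
    qed
    thus ?thesis using t0_pos by auto
  qed
  have "t0 \<le> chi N \<A> p" unfolding chi_def
  proof (rule cINF_greatest)
    show "{x. N x = 1} \<noteq> {}" using x1 by auto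
    fix x assume "x \<in> {x. N x = 1}"
    thus "t0 \<le> Sup (T p x)" using inT T_bdd by (intro cSup_upper) auto
  qed
  thus ?thesis using t0_pos by simp
qed

end

theorem theorem1:
  fixes \<A> :: "(real^'d^'d) set" and N :: "real^'d \<Rightarrow> real" and n p :: nat
  assumes "finite \<A>" and "\<A> \<noteq> {}"
    and "irreducible_set \<A>"
    and "is_norm N"
    and "n \<ge> 1" and "p \<ge> CARD('d) - 1"
  shows "jsr N \<A> \<le> setnorm N \<A> n powr (1 / real n)
       \<and> setnorm N \<A> n powr (1 / real n)
           \<le> (max 1 (jsr N \<A> ^ p) / chi N \<A> p) powr (1 / real n) * jsr N \<A>
       \<and> (max 1 (setnorm N \<A> 1 ^ p) / chi N \<A> p) powr (- 1 / real n)
           * setnorm N \<A> n powr (1 / real n) \<le> jsr N \<A>"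
proof -
  interpret jsys N \<A> using assms by (simp add: jsys_def nrm_def jsys_axioms_def)
  have chi: "chi N \<A> p > 0" using chi_pos[OF assms(3) assms(6)] .
  define \<rho> where "\<rho> = jsr N \<A>"
  define s where "s = setnorm N \<A> n"
  define \<eta> where "\<eta> = max 1 (\<rho> ^ p) / chi N \<A> p"
  define \<nu> where "\<nu> = max 1 (q ^ p) / chi N \<A> p"
  have r0: "\<rho> \<ge> 0" unfolding \<rho>_def by (rule jsr_nonneg)
  have s0: "s \<ge> 0" unfolding s_def by (rule setnorm_nonneg)
  have eta_pos: "\<eta> > 0" unfolding \<eta>_def using chi by simp
  have p1: "\<rho> \<le> s powr (1 / real n)" unfolding \<rho>_def s_def using part1[OF assms(5)] .
  have core: "chi N \<A> p * s \<le> \<rho> ^ n * max 1 (\<rho> ^ p)"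
    unfolding \<rho>_def s_def using part2_core[OF chi assms(5)] .
  hence "s \<le> \<eta> * \<rho> ^ n" unfolding \<eta>_def using chi by (simp add: field_simps)
  hence "s powr (1 / real n) \<le> (\<eta> * \<rho> ^ n) powr (1 / real n)" using s0 by (intro powr_mono2) auto
  also have "\<dots> = \<eta> powr (1 / real n) * (\<rho> ^ n) powr (1 / real n)"
    using eta_pos r0 by (simp add: powr_mult)
  also have "\<dots> = \<eta> powr (1 / real n) * \<rho>" using r0 assms(5) by (simp add: pow_powr_inv)
  finally have p2: "s powr (1 / real n) \<le> \<eta> powr (1 / real n) * \<rho>" .
  have "\<rho> \<le> q" unfolding \<rho>_def by (rule jsr_le_q)
  hence "\<rho> ^ p \<le> q ^ p" using r0 by (intro power_mono) auto
  hence eta_nu: "\<eta> \<le> \<nu>" unfolding \<eta>_def \<nu>_def using chi by (intro divide_right_mono) auto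
  hence nu_pos: "\<nu> > 0" using eta_pos by simp
  have "\<nu> powr (- 1 / real n) * s powr (1 / real n) \<le> \<nu> powr (- 1 / real n) * (\<eta> powr (1 / real n) * \<rho>)"
    using p2 by (intro mult_left_mono) auto
  also have "\<dots> = (\<eta> powr (1 / real n) / \<nu> powr (1 / real n)) * \<rho>"
    using nu_pos by (simp add: powr_minus_divide divide_inverse powr_minus)
  also have "\<dots> \<le> 1 * \<rho>"
  proof (intro mult_right_mono r0)
    have "\<eta> powr (1 / real n) \<le> \<nu> powr (1 / real n)" using eta_nu eta_pos by (intro powr_mono2) auto
    thus "\<eta> powr (1 / real n) / \<nu> powr (1 / real n) \<le> 1" using nu_pos by simp
  qed
  finally have p3: "\<nu> powr (- 1 / real n) * s powr (1 / real n) \<le> \<rho>" by simp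
  show ?thesis using p1 p2 p3 unfolding \<rho>_def s_def \<eta>_def \<nu>_def by blast
qed

end
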